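(* Consider a word $uav$ with $a \in A$ and $|ua| = i$. If the attribute $(x_i,y_i)$ at position $i$ satisfies $x_i + y_i > k+1$, then $uav \sim_k uv$.
   Context: $A$ is a finite alphabet and $k\in\mathbb{N}$. A word $a_1\cdots a_\ell$ is a (scattered) subword of $v$ if $v=v_0a_1v_1\cdots a_\ell v_\ell$; Simon's congruence $u\sim_k v$ holds iff $u$ and $v$ have the same subwords of length at most $k$. An $\mathsf{X}$-ranker is a nonempty word over $\{\mathsf{X}_a : a\in A\}$ and a $\mathsf{Y}$-ranker a nonempty word over $\{\mathsf{Y}_a : a\in A\}$; for a word $w$, $\mathsf{X}_a(w)$ is the smallest $a$-position of $w$, $r\mathsf{X}_a(w)$ is the smallest $a$-position greater than $r(w)$, $\mathsf{Y}_a(w)$ is the greatest $a$-position, and $r\mathsf{Y}_a(w)$ is the greatest $a$-position smaller than $r(w)$ (possibly undefined). The attribute of position $i$ of a word is $(x_i,y_i)$, where $x_i$ is the length of a shortest $\mathsf{X}$-ranker reaching $i$ and $y_i$ is the length of a shortest $\mathsf{Y}$-ranker reaching $i$. *)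

theory Defs
  imports Main "HOL-Library.Sublist"
begin

(* Words are lists; positions are 1-based: position j of w carries letter w ! (j - 1). *)

definition simon_cong :: "nat \<Rightarrow> 'a list \<Rightarrow> 'a list \<Rightarrow> bool" where
  "simon_cong k u v \<longleftrightarrow> (\<forall>w. length w \<le> k \<longrightarrow> (subseq w u \<longleftrightarrow> subseq w v))"

definition x_step :: "'a list \<Rightarrow> 'a \<Rightarrow> nat \<Rightarrow> nat option" where
  "x_step w a p = (if \<exists>j. p < j \<and> j \<le> length w \<and> w ! (j - 1) = a
     then Some (LEAST j. p < j \<and> j \<le> length w \<and> w ! (j - 1) = a) else None)"

definition y_step :: "'a list \<Rightarrow> 'a \<Rightarrow> nat \<Rightarrow> nat option" where
  "y_step w a p = (if \<exists>j. 1 \<le> j \<and> j < p \<and> j \<le> length w \<and> w ! (j - 1) = a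
     then Some (GREATEST j. 1 \<le> j \<and> j < p \<and> j \<le> length w \<and> w ! (j - 1) = a) else None)"

(* Evaluation of a ranker X_{a1} ... X_{an} (list [a1,...,an]), applied left to right *)
fun run_from :: "('a list \<Rightarrow> 'a \<Rightarrow> nat \<Rightarrow> nat option) \<Rightarrow> 'a list \<Rightarrow> nat \<Rightarrow> 'a list \<Rightarrow> nat option" where
  "run_from st w p [] = Some p"
| "run_from st w p (a # r) = (case st w a p of None \<Rightarrow> None | Some q \<Rightarrow> run_from st w q r)"

definition x_ranker_eval :: "'a list \<Rightarrow> 'a list \<Rightarrow> nat option" where
  "x_ranker_eval w r = run_from x_step w 0 r"

definition y_ranker_eval :: "'a list \<Rightarrow> 'a list \<Rightarrow> nat option" where
  "y_ranker_eval w r = run_from y_step w (length w + 1) r"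

definition x_attr :: "'a set \<Rightarrow> 'a list \<Rightarrow> nat \<Rightarrow> nat" where
  "x_attr A w i = (LEAST n. \<exists>r. r \<noteq> [] \<and> set r \<subseteq> A \<and> length r = n \<and> x_ranker_eval w r = Some i)"

definition y_attr :: "'a set \<Rightarrow> 'a list \<Rightarrow> nat \<Rightarrow> nat" where
  "y_attr A w i = (LEAST n. \<exists>r. r \<noteq> [] \<and> set r \<subseteq> A \<and> length r = n \<and> y_ranker_eval w r = Some i)"

end

theory Submission
  imports Defs
begin

definition seg :: "'a list \<Rightarrow> nat \<Rightarrow> nat \<Rightarrow> 'a list" where
  "seg w q r = take (r - q) (drop q w)"

lemma seg_split:
  assumes "q < j" "j \<le> r" "r \<le> length w"
  shows "seg w q r = seg w q (j - 1) @ w ! (j - 1) # seg w j r"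
proof -
  have e: "r - q = (j - 1 - q) + (r - j + 1)" using assms by auto
  have "seg w q r = take (j - 1 - q) (drop q w) @ take (r - j + 1) (drop (j - 1 - q) (drop q w))"
    unfolding seg_def by (subst e, subst take_add, rule refl)
  also have "drop (j - 1 - q) (drop q w) = drop (j - 1) w" using assms by (simp add: drop_drop)
  also have "take (r - j + 1) (drop (j - 1) w) = w ! (j - 1) # take (r - j) (drop j w)"
    using assms by (simp add: Cons_nth_drop_Suc[symmetric])
  finally show ?thesis unfolding seg_def using assms by simp
qed

lemma subseq_snocD:
  assumes "subseq (q @ [c]) xs"
  shows "\<exists>ys zs. xs = ys @ c # zs \<and> subseq q ys"
proof -
  obtain us vs where "xs = us @ vs" "subseq q us" "subseq [c] vs"
    using list_emb_appendD[OF assms] by blast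
  moreover then obtain z1 z2 where "vs = z1 @ c # z2"
    by (metis split_list subseq_singleton_left)
  ultimately show ?thesis by (metis append.assoc append_Cons subseq_rev_drop_many)
qed

lemma subseq_ConsD':
  assumes "subseq (c # q) xs"
  shows "\<exists>ys zs. xs = ys @ c # zs \<and> subseq q zs"
  using list_emb_ConsD[OF assms] by auto

lemma run_from_append:
  "run_from st w q (p @ t) = (case run_from st w q p of None \<Rightarrow> None | Some j \<Rightarrow> run_from st w j t)"
  by (induction p arbitrary: q) (auto split: option.splits)

lemma seg_suffix: "j1 \<le> j0 \<Longrightarrow> subseq (seg w j0 r) (seg w j1 r)"
proof -
  assume "j1 \<le> j0"
  then have "seg w j0 r = drop (j0 - j1) (seg w j1 r)"
    unfolding seg_def by (simp add: drop_take drop_drop)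
  then show ?thesis by (metis suffix_drop suffix_imp_subseq)
qed

lemma seg_prefix: "j0 \<le> j1 \<Longrightarrow> subseq (seg w s j0) (seg w s j1)"
proof -
  assume "j0 \<le> j1"
  then have "seg w s j0 = take (j0 - s) (seg w s j1)"
    unfolding seg_def by (simp add: min_def)
  then show ?thesis by (metis take_is_prefix prefix_imp_subseq)
qed

lemma x_run:
  assumes "subseq p (seg w q r)" "r \<le> length w" "q \<le> r"
  shows "\<exists>j. run_from x_step w q p = Some j \<and> q \<le> j \<and> j \<le> r \<and> subseq p (seg w q j)"
  using assms
proof (induction p arbitrary: q)
  case Nil
  then show ?case by (auto simp: seg_def)
next
  case (Cons b p)
  obtain ys zs where yz: "seg w q r = ys @ b # zs" "subseq p zs"
    using subseq_ConsD'[OF Cons.prems(1)] by blast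
  define j0 where "j0 = q + length ys + 1"
  have len: "length (seg w q r) = r - q" using Cons.prems unfolding seg_def by simp
  have lt: "length ys < r - q" proof -
    have "length ys < length (seg w q r)" unfolding yz(1) by simp
    then show ?thesis using len by simp
  qed
  have "seg w q r ! length ys = b" using yz(1) by simp
  then have "w ! (q + length ys) = b" using lt Cons.prems(2,3) unfolding seg_def by (simp add: nth_take)
  then have j0: "q < j0" "j0 \<le> r" "w ! (j0 - 1) = b" using lt unfolding j0_def by auto
  have "zs = drop (length ys + 1) (seg w q r)" using yz(1) by simp
  then have zs: "zs = seg w j0 r" unfolding seg_def j0_def by (simp add: drop_take drop_drop add.commute)
  let ?P = "\<lambda>j. q < j \<and> j \<le> length w \<and> w ! (j - 1) = b"
  have ex: "?P j0" using j0 Cons.prems by auto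
  define j1 where "j1 = (LEAST j. ?P j)"
  have j1: "?P j1" "j1 \<le> j0" using LeastI[of ?P, OF ex] Least_le[of ?P, OF ex] j1_def by auto
  have st: "x_step w b q = Some j1" unfolding x_step_def j1_def using ex by auto
  have "subseq p (seg w j1 r)" using yz(2) zs seg_suffix[OF j1(2)] subseq_order.trans by blast
  moreover have "j1 \<le> r" using j1(2) j0(2) by linarith
  ultimately obtain j where
    j: "run_from x_step w j1 p = Some j" "j1 \<le> j" "j \<le> r" "subseq p (seg w j1 j)" using Cons.IH Cons.prems(2) by blast
  have "seg w q j = seg w q (j1 - 1) @ b # seg w j1 j"
    using seg_split[of q j1 j w] j1(1) j(2,3) Cons.prems(2) by simp
  then have "subseq (b # p) (seg w q j)" using j(4) by (simp add: subseq_drop_many)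
  moreover have "run_from x_step w q (b # p) = Some j" using st j(1) by simp
  ultimately show ?case using j(3) j1(1) j(2) by auto
qed


lemma y_run:
  assumes "subseq q (seg w s r)" "r \<le> length w" "s \<le> r"
  shows "\<exists>j. run_from y_step w (r + 1) (rev q) = Some j \<and> s < j \<and> j \<le> r + 1 \<and> subseq q (seg w (j - 1) r)"
  using assms
proof (induction q arbitrary: r rule: rev_induct)
  case Nil
  then show ?case by (auto simp: seg_def)
next
  case (snoc c q)
  obtain ys zs where yz: "seg w s r = ys @ c # zs" "subseq q ys"
    using subseq_snocD[OF snoc.prems(1)] by blast
  define j0 where "j0 = s + length ys + 1"
  have len: "length (seg w s r) = r - s" using snoc.prems unfolding seg_def by simp
  have lt: "length ys < r - s" proof -
    have "length ys < length (seg w s r)" unfolding yz(1) by simp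
    then show ?thesis using len by simp
  qed
  have "seg w s r ! length ys = c" using yz(1) by simp
  then have "w ! (s + length ys) = c" using lt snoc.prems(2,3) unfolding seg_def by (simp add: nth_take)
  then have j0: "s < j0" "j0 \<le> r" "w ! (j0 - 1) = c" using lt unfolding j0_def by auto
  have "ys = take (length ys) (seg w s r)" using yz(1) by simp
  then have ys: "ys = seg w s (j0 - 1)" using lt unfolding seg_def j0_def by (simp add: min_def)
  let ?P = "\<lambda>j. 1 \<le> j \<and> j < r + 1 \<and> j \<le> length w \<and> w ! (j - 1) = c"
  have ex: "?P j0" using j0 snoc.prems by auto
  have bnd: "\<forall>y. ?P y \<longrightarrow> y \<le> r" by auto
  define j1 where "j1 = (GREATEST j. ?P j)"
  have j1: "?P j1" "j0 \<le> j1" using GreatestI_nat[of ?P, OF ex] Greatest_le_nat[of ?P, OF ex] bnd j1_def by auto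
  have st: "y_step w c (r + 1) = Some j1" unfolding y_step_def j1_def using ex by auto
  have "j0 - 1 \<le> j1 - 1" using j1(2) by simp
  then have "subseq (seg w s (j0 - 1)) (seg w s (j1 - 1))" by (rule seg_prefix)
  then have "subseq q (seg w s (j1 - 1))" using yz(2) ys subseq_order.trans by blast
  moreover have "j1 - 1 \<le> length w" "s \<le> j1 - 1" using j1 j0 by auto
  ultimately obtain j where
    j: "run_from y_step w (j1 - 1 + 1) (rev q) = Some j" "s < j" "j \<le> j1 - 1 + 1" "subseq q (seg w (j - 1) (j1 - 1))"
    using snoc.IH by blast
  have e: "j1 - 1 + 1 = j1" using j1 by auto
  have "seg w (j - 1) r = seg w (j - 1) (j1 - 1) @ c # seg w j1 r"
    using seg_split[of "j - 1" j1 r w] j1(1) j(2,3) e snoc.prems(2) by simp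
  moreover have "subseq [c] (c # seg w j1 r)" by simp
  ultimately have "subseq (q @ [c]) (seg w (j - 1) r)" using list_emb_append_mono[OF j(4)] by metis
  moreover have "run_from y_step w (r + 1) (rev (q @ [c])) = Some j" using st j(1) e by simp
  ultimately show ?case using j(2,3) j1(1) e by auto
qed


lemma main_split:
  assumes "subseq s (u @ a # v)" "\<not> subseq s (u @ v)"
  obtains p q where "s = p @ a # q" "subseq p u" "subseq q v" "\<not> subseq (p @ [a]) u" "\<not> subseq (a # q) v"
proof -
  define S where "S = {m. m \<le> length s \<and> subseq (take m s) u \<and> subseq (drop m s) (a # v)}"
  obtain s1 s2 where "s = s1 @ s2" "subseq s1 u" "subseq s2 (a # v)"
    using assms(1) subseq_append_iff by blast
  then have "length s1 \<in> S" unfolding S_def by simp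
  moreover have fin: "finite S" unfolding S_def by simp
  ultimately have mS: "Max S \<in> S" using Max_in by blast
  define m where "m = Max S"
  have m: "m \<le> length s" "subseq (take m s) u" "subseq (drop m s) (a # v)" using mS unfolding S_def m_def by auto
  have nv: "\<not> subseq (drop m s) v"
  proof
    assume "subseq (drop m s) v"
    then have "subseq (take m s @ drop m s) (u @ v)" using m(2) list_emb_append_mono by blast
    then show False using assms(2) by simp
  qed
  obtain q where dq: "drop m s = a # q" "subseq q v"
  proof (cases "drop m s")
    case Nil
    then show ?thesis using nv by simp
  next
    case (Cons c q)
    show ?thesis
    proof (cases "c = a")
      case True
      then show ?thesis using that Cons m(3) by simp
    next
      case False
      then show ?thesis using Cons m(3) nv by simp
    qed
  qed
  define p where "p = take m s"
  have sp: "s = p @ a # q" using dq(1) unfolding p_def by (metis append_take_drop_id)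
  have n1: "\<not> subseq (p @ [a]) u"
  proof
    assume h: "subseq (p @ [a]) u"
    have t: "take (m + 1) s = p @ [a]" unfolding take_add p_def dq(1) by simp
    have "drop (m + 1) s = drop 1 (drop m s)" by (simp add: drop_drop add.commute)
    then have d: "drop (m + 1) s = q" unfolding dq(1) by simp
    have "length (drop m s) = length q + 1" unfolding dq(1) by simp
    then have l: "m + 1 \<le> length s" by simp
    have "subseq q (a # v)" using dq(2) by (rule list_emb.list_emb_Cons)
    then have "m + 1 \<in> S" unfolding S_def using h t d l by simp
    then have "m + 1 \<le> m" unfolding m_def using fin by simp
    then show False by simp
  qed
  have n2: "\<not> subseq (a # q) v"
  proof
    assume "subseq (a # q) v"
    then have "subseq (p @ a # q) (u @ v)" using m(2) p_def list_emb_append_mono by blast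
    then show False using assms(2) sp by simp
  qed
  have pu: "subseq p u" using m(2) unfolding p_def .
  show ?thesis by (rule that[OF sp pu dq(2) n1 n2])
qed

theorem proposition3:
  fixes A :: "'a set" and u v :: "'a list" and a :: 'a and k i :: nat
  assumes "finite A" and "a \<in> A" and "set u \<subseteq> A" and "set v \<subseteq> A"
    and "i = length (u @ [a])"
    and "x_attr A (u @ a # v) i + y_attr A (u @ a # v) i > k + 1"
  shows "simon_cong k (u @ a # v) (u @ v)"
  unfolding simon_cong_def
proof (intro allI impI iffI)
  fix s :: "'a list"
  assume "subseq s (u @ v)"
  moreover have "subseq v (a # v)" by (rule list_emb.list_emb_Cons) simp
  then have "subseq (u @ v) (u @ a # v)" by (simp only: subseq_append')
  ultimately show "subseq s (u @ a # v)" using subseq_order.trans by blast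
next
  fix s :: "'a list"
  assume ks: "length s \<le> k" and ss: "subseq s (u @ a # v)"
  show "subseq s (u @ v)"
  proof (rule ccontr)
    assume "\<not> subseq s (u @ v)"
    then obtain p q where pq: "s = p @ a # q" "subseq p u" "subseq q v" "\<not> subseq (p @ [a]) u" "\<not> subseq (a # q) v"
      by (rule main_split[OF ss])
    define w where "w = u @ a # v"
    have iu: "i = length u + 1" using assms(5) by simp
    have wi: "w ! (i - 1) = a" "i \<le> length w" unfolding w_def using assms(5) by simp_all
    have "seg w 0 (length u) = u" unfolding w_def seg_def by simp
    then obtain j where j: "run_from x_step w 0 p = Some j" "j \<le> length u" "subseq p (seg w 0 j)"
      using x_run[of p w 0 "length u"] pq(2) unfolding w_def by auto
    let ?P = "\<lambda>j'. j < j' \<and> j' \<le> length w \<and> w ! (j' - 1) = a"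
    have Pi: "?P i" using wi j(2) iu by auto
    have "(LEAST j'. ?P j') = i"
    proof (rule Least_equality)
      show "?P i" by (rule Pi)
    next
      fix y assume Py: "?P y"
      show "i \<le> y"
      proof (rule ccontr)
        assume "\<not> i \<le> y"
        then have yl: "y \<le> length u" "y \<ge> 1" using iu Py by auto
        then have "y - 1 < length u" by linarith
        then have "u ! (y - 1) = a" using Py unfolding w_def by (simp add: nth_append)
        then have "drop j u ! (y - 1 - j) = a" using Py yl j(2) by simp
        moreover have "y - 1 - j < length (drop j u)" using Py yl by auto
        ultimately have "a \<in> set (drop j u)" by (metis nth_mem)
        then have "subseq [a] (drop j u)" by (simp add: subseq_singleton_left)
        moreover have "seg w 0 j = take j u" unfolding seg_def w_def using j(2) by simp
        ultimately have "subseq (p @ [a]) (take j u @ drop j u)" using j(3) list_emb_append_mono by metis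
        then show False using pq(4) by simp
      qed
    qed
    then have "x_step w a j = Some i" unfolding x_step_def using Pi by auto
    then have xe: "x_ranker_eval w (p @ [a]) = Some i" unfolding x_ranker_eval_def
      using j(1) by (simp add: run_from_append)
    have "set (p @ [a]) \<subseteq> A" using pq(2) assms(2,3) by (auto dest: list_emb_set)
    then have xa: "x_attr A w i \<le> length p + 1" unfolding x_attr_def
      using xe by (intro Least_le) (rule exI[of _ "p @ [a]"], auto)
    have sv: "seg w i (length w) = v" unfolding w_def seg_def iu by simp
    then obtain j where j: "run_from y_step w (length w + 1) (rev q) = Some j" "i < j" "j \<le> length w + 1"
      "subseq q (seg w (j - 1) (length w))"
      using y_run[of q w i "length w"] pq(3) wi by auto
    let ?Q = "\<lambda>j'. 1 \<le> j' \<and> j' < j \<and> j' \<le> length w \<and> w ! (j' - 1) = a"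
    have Qi: "?Q i" using wi j(2) iu by auto
    have "(GREATEST j'. ?Q j') = i"
    proof (rule Greatest_equality)
      show "?Q i" by (rule Qi)
    next
      fix y assume Qy: "?Q y"
      show "y \<le> i"
      proof (rule ccontr)
        assume "\<not> y \<le> i"
        then have "seg w i (length w) = seg w i (y - 1) @ w ! (y - 1) # seg w y (length w)"
          using Qy by (intro seg_split) auto
        then have vv: "v = seg w i (y - 1) @ a # seg w y (length w)" using sv Qy by simp
        have "y \<le> j - 1" using Qy by auto
        then have "subseq (seg w (j - 1) (length w)) (seg w y (length w))" by (rule seg_suffix)
        then have "subseq q (seg w y (length w))" using j(4) subseq_order.trans by blast
        then have "subseq (a # q) (a # seg w y (length w))" by simp
        then have "subseq (a # q) v" unfolding vv by (rule subseq_drop_many)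
        then show False using pq(5) by simp
      qed
    qed
    then have "y_step w a j = Some i" unfolding y_step_def using Qi by auto
    then have ye: "y_ranker_eval w (rev q @ [a]) = Some i" unfolding y_ranker_eval_def
      using j(1) by (simp add: run_from_append)
    have "set (rev q @ [a]) \<subseteq> A" using pq(3) assms(2,4) by (auto dest: list_emb_set)
    then have ya: "y_attr A w i \<le> length q + 1" unfolding y_attr_def
      using ye by (intro Least_le) (rule exI[of _ "rev q @ [a]"], auto)
    have "x_attr A w i + y_attr A w i \<le> length s + 1" using xa ya pq(1) by simp
    then show False using assms(6) ks unfolding w_def by simp
  qed
qed

end
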